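(* Let $q$ be a prime power with $q\equiv 1 \pmod 3$, let $\delta\in\mathbb{F}_q$ be a cubic nonresidue, and let $\mathbb{F}_q(\delta^{1/3})$ be the cubic extension of $\mathbb{F}_q$ obtained by adjoining a cube root $\delta^{1/3}$ of $\delta$, with $\mathbb{F}_q$-basis $\{1,\delta^{1/3},\delta^{2/3}\}$. Writing $\alpha=\alpha_1+\alpha_2\delta^{1/3}+\alpha_3\delta^{2/3}$ with $\alpha_i\in\mathbb{F}_q$, define \[\mathbb{H}_q=\left\{(\alpha,\beta)\in \mathbb{F}_q(\delta^{1/3})\times \mathbb{F}_q(\delta^{1/3}) : \alpha_2\beta_3-\alpha_3\beta_2\neq 0\right\}.\] Then the rule \[ \begin{bmatrix} a & b & c\\ d & e & f\\ r & s & t \end{bmatrix} (\alpha,\beta) = \left(\frac{a\alpha+b\beta+c}{r\alpha+s\beta+t}, \frac{d\alpha+e\beta+f}{r\alpha+s\beta+t} \right) \] is well defined for every matrix in $\mathrm{GL}_3(\mathbb{F}_q)$ and every $(\alpha,\beta)\in\mathbb{H}_q$ (i.e. the denominator is nonzero and the image lies in $\mathbb{H}_q$), and it defines a (left) group action of $\mathrm{GL}_3(\mathbb{F}_q)$ on $\mathbb{H}_q$.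
   Context: $\mathrm{GL}_3(\mathbb{F}_q)$ is the group of invertible $3\times 3$ matrices over the finite field $\mathbb{F}_q$. A cubic nonresidue is an element of $\mathbb{F}_q^\times$ that is not a cube in $\mathbb{F}_q$. *)

theory Defs
  imports "HOL-Analysis.Analysis" "HOL-Library.Numeral_Type"
begin

text \<open>The cubic extension F_q(delta^(1/3)) of a field 'a, modelled concretely as
  triples (a1,a2,a3) standing for a1 + a2*theta + a3*theta^2 with theta^3 = delta.\<close>

type_synonym 'a cub = "'a \<times> 'a \<times> 'a"

definition cubic_nonresidue :: "'a::field \<Rightarrow> bool" where
  "cubic_nonresidue d \<longleftrightarrow> d \<noteq> 0 \<and> \<not> (\<exists>x. x ^ 3 = d)"

definition cub_of :: "'a::field \<Rightarrow> 'a cub" where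
  "cub_of a = (a, 0, 0)"

definition cub_add :: "'a::field cub \<Rightarrow> 'a cub \<Rightarrow> 'a cub" where
  "cub_add x y = (case x of (x1, x2, x3) \<Rightarrow> case y of (y1, y2, y3) \<Rightarrow>
     (x1 + y1, x2 + y2, x3 + y3))"

definition cub_mul :: "'a::field \<Rightarrow> 'a cub \<Rightarrow> 'a cub \<Rightarrow> 'a cub" where
  "cub_mul d x y = (case x of (x1, x2, x3) \<Rightarrow> case y of (y1, y2, y3) \<Rightarrow>
     (x1 * y1 + d * (x2 * y3 + x3 * y2),
      x1 * y2 + x2 * y1 + d * (x3 * y3),
      x1 * y3 + x2 * y2 + x3 * y1))"

definition cub_inv :: "'a::field \<Rightarrow> 'a cub \<Rightarrow> 'a cub" where
  "cub_inv d x = (if \<exists>y. cub_mul d x y = cub_of 1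
                   then (SOME y. cub_mul d x y = cub_of 1) else cub_of 0)"

definition cub_div :: "'a::field \<Rightarrow> 'a cub \<Rightarrow> 'a cub \<Rightarrow> 'a cub" where
  "cub_div d x y = cub_mul d x (cub_inv d y)"

definition cub_lin :: "'a::field \<Rightarrow> 'a \<Rightarrow> 'a \<Rightarrow> 'a \<Rightarrow> 'a cub \<Rightarrow> 'a cub \<Rightarrow> 'a cub" where
  "cub_lin d a b c \<alpha> \<beta> =
     cub_add (cub_add (cub_mul d (cub_of a) \<alpha>) (cub_mul d (cub_of b) \<beta>)) (cub_of c)"

definition Hq :: "('a::field cub \<times> 'a cub) set" where
  "Hq = {(\<alpha>, \<beta>). fst (snd \<alpha>) * snd (snd \<beta>) - snd (snd \<alpha>) * fst (snd \<beta>) \<noteq> 0}"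

definition denom :: "'a::field \<Rightarrow> 'a^3^3 \<Rightarrow> 'a cub \<times> 'a cub \<Rightarrow> 'a cub" where
  "denom d A p = cub_lin d (A$3$1) (A$3$2) (A$3$3) (fst p) (snd p)"

definition act :: "'a::field \<Rightarrow> 'a^3^3 \<Rightarrow> 'a cub \<times> 'a cub \<Rightarrow> 'a cub \<times> 'a cub" where
  "act d A p =
     (cub_div d (cub_lin d (A$1$1) (A$1$2) (A$1$3) (fst p) (snd p)) (denom d A p),
      cub_div d (cub_lin d (A$2$1) (A$2$2) (A$2$3) (fst p) (snd p)) (denom d A p))"

end

theory Submission imports Defs "HOL-Computational_Algebra.Polynomial_Factorial" begin

definition P :: "'a::field cub \<Rightarrow> 'a poly" where
  "P x = [:fst x, fst (snd x), snd (snd x):]"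

lemma cub_poly:
  "P x * P y = P (cub_mul d x y) + [:-d,0,0,1:] *
     [:fst (snd x) * snd (snd y) + snd (snd x) * fst (snd y), snd (snd x) * snd (snd y):]"
  by (cases x; cases y) (simp add: P_def cub_mul_def algebra_simps)

lemma P_zero: "P x = 0 \<longleftrightarrow> x = cub_of 0"
  by (cases x) (auto simp: P_def cub_of_def)

lemma deg1_root:
  fixes g :: "'a::field poly"
  assumes "degree g = 1" shows "\<exists>x. poly g x = 0"
proof -
  have g: "poly g x = coeff g 0 + coeff g 1 * x" for x
    using assms by (simp add: poly_altdef)
  have "coeff g 1 \<noteq> 0" using assms by (metis leading_coeff_0_iff zero_neq_one degree_0)
  then have "poly g (- coeff g 0 / coeff g 1) = 0" by (simp add: g field_simps)
  then show ?thesis by blast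
qed

lemma irred:
  fixes d :: "'a::field"
  assumes "\<not> (\<exists>x. x ^ 3 = d)"
  shows "irreducible [:-d,0,0,1:]"
proof (rule irreducibleI)
  show "[:-d,0,0,1:] \<noteq> 0" by simp
  show "\<not> is_unit [:-d,0,0,1:]" by (simp add: is_unit_poly_iff)
  fix g h :: "'a poly" assume f: "[:-d,0,0,1:] = g * h"
  have nr: "poly [:-d,0,0,1:] x \<noteq> 0" for x using assms
    by (simp add: algebra_simps power3_eq_cube)
  have g0: "g \<noteq> 0" and h0: "h \<noteq> 0" using f by auto
  have dd: "degree g + degree h = 3" using f g0 h0 by (metis degree_mult_eq degree_pCons_eq_if numeral_3_eq_3 one_neq_zero pCons_eq_0_iff  degree_pCons_eq)
  show "is_unit g \<or> is_unit h"
  proof (cases "degree g = 0 \<or> degree h = 0")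
    case True then show ?thesis using g0 h0 by (auto simp: is_unit_iff_degree)
  next
    case False
    then have "degree g = 1 \<or> degree h = 1" using dd by linarith
    then obtain x where "poly g x = 0 \<or> poly h x = 0" using deg1_root by blast
    then have "poly [:-d,0,0,1:] x = 0" using f by auto
    with nr show ?thesis by blast
  qed
qed

lemma no_zd:
  fixes d :: "'a::field"
  assumes "\<not> (\<exists>x. x ^ 3 = d)" and "cub_mul d x y = cub_of 0"
  shows "x = cub_of 0 \<or> y = cub_of 0"
proof -
  have pr: "prime_elem [:-d,0,0,1:]" using irred[OF assms(1)] by (simp add: field_poly_irreducible_imp_prime)
  have P0: "P (cub_of 0) = (0 :: 'a poly)" using P_zero by blast
  have "P x * P y = [:-d,0,0,1:] *
     [:fst (snd x) * snd (snd y) + snd (snd x) * fst (snd y), snd (snd x) * snd (snd y):]"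
    using cub_poly[of x y d] unfolding assms(2) P0 by simp
  then have "[:-d,0,0,1:] dvd P x * P y" by (rule dvdI)
  then have "[:-d,0,0,1:] dvd P x \<or> [:-d,0,0,1:] dvd P y" using pr prime_elem_dvd_mult_iff by blast
  moreover have "P z = 0" if "[:-d,0,0,1:] dvd P z" for z :: "'a cub"
  proof (rule ccontr)
    assume nz: "P z \<noteq> 0"
    have "degree [:-d,0,0,1:] \<le> degree (P z)" by (rule dvd_imp_degree_le[OF that nz])
    moreover have "degree (P z) \<le> 2" by (simp add: P_def)
    ultimately show False by simp
  qed
  ultimately show ?thesis using P_zero by blast
qed

lemma cub_inj:
  fixes d :: "'a::field"
  assumes "\<not> (\<exists>x. x ^ 3 = d)" "x \<noteq> cub_of 0"
  shows "inj (cub_mul d x)"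
proof (rule injI)
  fix y z assume h: "cub_mul d x y = cub_mul d x z"
  obtain y1 y2 y3 where y: "y = (y1,y2,y3)" by (cases y rule: prod_cases3)
  obtain z1 z2 z3 where z: "z = (z1,z2,z3)" by (cases z rule: prod_cases3)
  have "cub_mul d x (y1-z1, y2-z2, y3-z3) = cub_of 0"
    using h by (cases x rule: prod_cases3) (simp add: y z cub_mul_def cub_of_def algebra_simps)
  then have "(y1-z1, y2-z2, y3-z3) = cub_of 0" using no_zd[OF assms(1)] assms(2) by blast
  then show "y = z" by (simp add: y z cub_of_def)
qed

lemma cub_inv_mul:
  fixes d :: "'a::{field,finite}"
  assumes "\<not> (\<exists>x. x ^ 3 = d)" "x \<noteq> cub_of 0"
  shows "cub_mul d x (cub_inv d x) = cub_of 1"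
proof -
  have "surj (cub_mul d x)" by (rule finite_UNIV_inj_surj[OF finite_class.finite_UNIV cub_inj[OF assms]])
  then have ex: "\<exists>y. cub_mul d x y = cub_of 1" by (metis surjD)
  show ?thesis unfolding cub_inv_def if_P[OF ex] by (rule someI_ex[OF ex])
qed

lemma mul_comm: "cub_mul d x y = cub_mul d y x"
  by (cases x rule: prod_cases3; cases y rule: prod_cases3) (simp add: cub_mul_def algebra_simps)

lemma mul_assoc: "cub_mul d (cub_mul d x y) z = cub_mul d x (cub_mul d y z)"
  by (cases x rule: prod_cases3; cases y rule: prod_cases3; cases z rule: prod_cases3)
     (simp add: cub_mul_def algebra_simps)

lemma mul_one: "cub_mul d x (cub_of 1) = x"
  by (cases x rule: prod_cases3) (simp add: cub_mul_def cub_of_def)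

lemma one_mul: "cub_mul d (cub_of 1) x = x"
  by (cases x rule: prod_cases3) (simp add: cub_mul_def cub_of_def)

lemma mul_zero: "cub_mul d (cub_of 0) x = cub_of 0"
  by (cases x rule: prod_cases3) (simp add: cub_mul_def cub_of_def)

lemma inv_unique:
  assumes "cub_mul d x y = cub_of 1" "cub_mul d x z = cub_of 1"
  shows "y = z"
  by (metis assms mul_assoc mul_comm one_mul)

lemma cub_inv_one: "cub_inv d (cub_of 1) = cub_of 1"
proof -
  have "\<exists>y. cub_mul d (cub_of 1) y = cub_of 1" using one_mul by blast
  then have "cub_mul d (cub_of 1) (cub_inv d (cub_of 1)) = cub_of 1" (is ?g)
  proof -
    assume ex: "\<exists>y. cub_mul d (cub_of 1) y = cub_of 1"
    show ?g unfolding cub_inv_def if_P[OF ex] by (rule someI_ex[OF ex])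
  qed
  then show ?thesis using one_mul by metis
qed

definition lin3 :: "'a::field \<Rightarrow> 'a \<Rightarrow> 'a \<Rightarrow> 'a \<Rightarrow> 'a cub \<Rightarrow> 'a cub \<Rightarrow> 'a cub \<Rightarrow> 'a cub" where
  "lin3 d a b c u v w = cub_add (cub_add (cub_mul d (cub_of a) u) (cub_mul d (cub_of b) v)) (cub_mul d (cub_of c) w)"

lemma lin_scale:
  assumes "cub_mul d w wi = cub_of 1"
  shows "cub_lin d a b c (cub_mul d u wi) (cub_mul d v wi) = cub_mul d (lin3 d a b c u v w) wi"
proof -
  obtain w1 w2 w3 where w: "w = (w1,w2,w3)" by (cases w rule: prod_cases3)
  obtain i1 i2 i3 where i: "wi = (i1,i2,i3)" by (cases wi rule: prod_cases3)
  obtain u1 u2 u3 where u: "u = (u1,u2,u3)" by (cases u rule: prod_cases3)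
  obtain v1 v2 v3 where v: "v = (v1,v2,v3)" by (cases v rule: prod_cases3)
  have h1: "w1 * i1 + d * (w2 * i3 + w3 * i2) = 1" and h2: "w1 * i2 + w2 * i1 + d * (w3 * i3) = 0"
    and h3: "w1 * i3 + w2 * i2 + w3 * i1 = 0"
    using assms by (simp_all add: w i cub_mul_def cub_of_def)
  show ?thesis
    apply (simp add: w i u v cub_lin_def lin3_def cub_mul_def cub_add_def cub_of_def)
    apply (intro conjI)
    subgoal using h1 h2 h3 by algebra
    subgoal using h1 h2 h3 by algebra
    subgoal using h1 h2 h3 by algebra
    done
qed

lemma div_scale:
  fixes d :: "'a::{field,finite}"
  assumes nr: "\<not> (\<exists>x. x ^ 3 = d)" and "cub_mul d w wi = cub_of 1" and Y: "Y \<noteq> cub_of 0"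
  shows "cub_div d (cub_mul d X wi) (cub_mul d Y wi) = cub_div d X Y"
proof -
  have "cub_mul d (cub_mul d Y wi) w = Y" using assms(2)
    by (metis mul_assoc mul_comm mul_one)
  then have Yw: "cub_mul d Y wi \<noteq> cub_of 0" using Y mul_zero by metis
  let ?z = "cub_inv d (cub_mul d Y wi)" let ?yi = "cub_inv d Y"
  have z: "cub_mul d (cub_mul d Y wi) ?z = cub_of 1" using cub_inv_mul[OF nr Yw] .
  have "cub_mul d Y (cub_mul d wi ?z) = cub_of 1" using z mul_assoc by metis
  then have "cub_mul d wi ?z = ?yi" using inv_unique cub_inv_mul[OF nr Y] by metis
  then show ?thesis unfolding cub_div_def by (metis mul_assoc)
qed

definition det3 :: "'a::field cub \<Rightarrow> 'a cub \<Rightarrow> 'a cub \<Rightarrow> 'a" where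
  "det3 x y z = fst x * (fst (snd y) * snd (snd z) - snd (snd y) * fst (snd z))
     - fst (snd x) * (fst y * snd (snd z) - snd (snd y) * fst z)
     + snd (snd x) * (fst y * fst (snd z) - fst (snd y) * fst z)"

definition N :: "'a::field \<Rightarrow> 'a cub \<Rightarrow> 'a" where
  "N d z = det3 z (d * snd (snd z), fst z, fst (snd z)) (d * fst (snd z), d * snd (snd z), fst z)"

lemma det3_mul: "det3 (cub_mul d z x) (cub_mul d z y) (cub_mul d z w) = N d z * det3 x y w"
  by (cases x rule: prod_cases3; cases y rule: prod_cases3; cases z rule: prod_cases3; cases w rule: prod_cases3)
     (simp add: cub_mul_def det3_def N_def algebra_simps)

lemma det3_lin:
  "det3 (cub_lin d q1 q2 q3 \<alpha> \<beta>) (cub_lin d a b c \<alpha> \<beta>) (cub_lin d e f g \<alpha> \<beta>) =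
   (a*f*q3 + b*g*q1 + c*e*q2 - a*g*q2 - b*e*q3 - c*f*q1) *
   (fst (snd \<alpha>) * snd (snd \<beta>) - snd (snd \<alpha>) * fst (snd \<beta>))"
  by (cases \<alpha> rule: prod_cases3; cases \<beta> rule: prod_cases3)
     (simp add: cub_mul_def cub_lin_def cub_add_def cub_of_def det3_def algebra_simps)

lemma det3_zero: "det3 (cub_of 0) y z = 0"
  by (simp add: det3_def cub_of_def)

lemma det3_one: "det3 (cub_of 1) y z = fst (snd y) * snd (snd z) - snd (snd y) * fst (snd z)"
  by (simp add: det3_def cub_of_def)

lemma lin_AB:
  fixes A B :: "'a::field^3^3"
  shows "cub_lin d ((A**B)$i$1) ((A**B)$i$2) ((A**B)$i$3) \<alpha> \<beta> =
    lin3 d (A$i$1) (A$i$2) (A$i$3) (cub_lin d (B$1$1) (B$1$2) (B$1$3) \<alpha> \<beta>)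
      (cub_lin d (B$2$1) (B$2$2) (B$2$3) \<alpha> \<beta>) (cub_lin d (B$3$1) (B$3$2) (B$3$3) \<alpha> \<beta>)"
  by (cases \<alpha> rule: prod_cases3; cases \<beta> rule: prod_cases3)
     (simp add: matrix_matrix_mult_def sum_3 cub_mul_def cub_lin_def lin3_def cub_add_def cub_of_def algebra_simps)


lemma part1:
  fixes d :: "'a::{field,finite}" and A :: "'a^3^3"
  assumes nr: "\<not> (\<exists>x. x ^ 3 = d)" and inv: "invertible A" and pH: "p \<in> Hq"
  shows "denom d A p \<noteq> cub_of 0 \<and> act d A p \<in> Hq"
proof -
  obtain \<alpha> \<beta> where p: "p = (\<alpha>, \<beta>)" by (cases p)
  define w where "w = denom d A p"
  define u where "u = cub_lin d (A$1$1) (A$1$2) (A$1$3) \<alpha> \<beta>"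
  define v where "v = cub_lin d (A$2$1) (A$2$2) (A$2$3) \<alpha> \<beta>"
  have Dp: "fst (snd \<alpha>) * snd (snd \<beta>) - snd (snd \<alpha>) * fst (snd \<beta>) \<noteq> 0"
    using pH by (simp add: p Hq_def)
  have dA: "det A \<noteq> 0" using inv by (simp add: invertible_det_nz)
  have "det3 w u v = det A * (fst (snd \<alpha>) * snd (snd \<beta>) - snd (snd \<alpha>) * fst (snd \<beta>))"
    unfolding w_def u_def v_def denom_def p fst_conv snd_conv det3_lin det_3
    by (simp add: algebra_simps)
  then have key: "det3 w u v \<noteq> 0" using Dp dA by simp
  then have w0: "w \<noteq> cub_of 0" using det3_zero by metis
  define wi where "wi = cub_inv d w"
  have hw: "cub_mul d w wi = cub_of 1" unfolding wi_def using cub_inv_mul[OF nr w0] .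
  define U where "U = cub_mul d u wi"
  define V where "V = cub_mul d v wi"
  have act: "act d A p = (U, V)" by (simp add: act_def p U_def V_def cub_div_def wi_def w_def u_def v_def)
  have "cub_mul d w U = u" unfolding U_def using hw by (metis mul_assoc mul_comm mul_one)
  moreover have "cub_mul d w V = v" unfolding V_def using hw by (metis mul_assoc mul_comm mul_one)
  moreover have "cub_mul d w (cub_of 1) = w" by (rule mul_one)
  ultimately have "det3 w u v = N d w * det3 (cub_of 1) U V" using det3_mul by metis
  then have "det3 (cub_of 1) U V \<noteq> 0" using key by auto
  then have "act d A p \<in> Hq" by (simp add: act Hq_def det3_one)
  with w0 show ?thesis by (simp add: w_def)
qed

lemma part3:
  fixes d :: "'a::{field,finite}" and A B :: "'a^3^3"
  assumes nr: "\<not> (\<exists>x. x ^ 3 = d)" and invA: "invertible A" and invB: "invertible B" and pH: "p \<in> Hq"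
  shows "act d (A ** B) p = act d A (act d B p)"
proof -
  obtain \<alpha> \<beta> where p: "p = (\<alpha>, \<beta>)" by (cases p)
  define w where "w = denom d B p"
  define u where "u = cub_lin d (B$1$1) (B$1$2) (B$1$3) \<alpha> \<beta>"
  define v where "v = cub_lin d (B$2$1) (B$2$2) (B$2$3) \<alpha> \<beta>"
  have w0: "w \<noteq> cub_of 0" using part1[OF nr invB pH] by (simp add: w_def)
  define wi where "wi = cub_inv d w"
  have hw: "cub_mul d w wi = cub_of 1" unfolding wi_def using cub_inv_mul[OF nr w0] .
  have actB: "act d B p = (cub_mul d u wi, cub_mul d v wi)"
    by (simp add: act_def p cub_div_def wi_def w_def u_def v_def)
  have wB: "w = cub_lin d (B$3$1) (B$3$2) (B$3$3) \<alpha> \<beta>" by (simp add: w_def denom_def p)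
  have Y0: "denom d (A ** B) p \<noteq> cub_of 0" using part1[OF nr invertible_mult[OF invA invB] pH] by simp
  have LA: "cub_lin d ((A**B)$i$1) ((A**B)$i$2) ((A**B)$i$3) \<alpha> \<beta> = lin3 d (A$i$1) (A$i$2) (A$i$3) u v w" for i
    unfolding lin_AB u_def v_def wB ..
  have Y0': "lin3 d (A$3$1) (A$3$2) (A$3$3) u v w \<noteq> cub_of 0" using Y0 LA[of 3] by (simp add: denom_def p)
  show ?thesis
    unfolding actB
    by (simp add: act_def denom_def p lin_scale[OF hw] div_scale[OF nr hw Y0'] LA)
qed

lemma part2:
  fixes d :: "'a::{field,finite}"
  shows "act d (mat 1) p = p"
proof -
  obtain \<alpha> \<beta> where p: "p = (\<alpha>, \<beta>)" by (cases p)
  have "cub_lin d 1 0 0 \<alpha> \<beta> = \<alpha>" "cub_lin d 0 1 0 \<alpha> \<beta> = \<beta>" "cub_lin d 0 0 1 \<alpha> \<beta> = cub_of 1"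
    by (cases \<alpha> rule: prod_cases3; cases \<beta> rule: prod_cases3; simp add: cub_lin_def cub_mul_def cub_add_def cub_of_def)+
  then show ?thesis
    by (simp add: act_def denom_def p mat_def cub_div_def cub_inv_one mul_one)
qed

theorem lemma2p2:
  fixes \<delta> :: "'a::{field,finite}"
  assumes "CARD('a) mod 3 = 1"
    and "cubic_nonresidue \<delta>"
  shows "(\<forall>A :: 'a^3^3. \<forall>p \<in> Hq. invertible A \<longrightarrow>
            denom \<delta> A p \<noteq> cub_of 0 \<and> act \<delta> A p \<in> Hq)
       \<and> (\<forall>p \<in> Hq. act \<delta> (mat 1) p = p)
       \<and> (\<forall>A B :: 'a^3^3. \<forall>p \<in> Hq. invertible A \<longrightarrow> invertible B \<longrightarrow>
            act \<delta> (A ** B) p = act \<delta> A (act \<delta> B p))"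
proof -
  have nr: "\<not> (\<exists>x. x ^ 3 = \<delta>)" using assms(2) by (simp add: cubic_nonresidue_def)
  show ?thesis using part1[OF nr] part2 part3[OF nr] by blast
qed

end
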